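(* Let $q\neq-1$ be real and $n\ge1$. Then $$T_n(x,s,q)\,T_n(x,qs,q)-(x^2+qs)\,U_{n-1}(x,qs,q)\,U_{n-1}(x,q^2s,q)=q^{\binom{n+1}{2}}(-s)^n.$$
   Context: $T_0=1$, $T_1=x$, $T_n(x,s,q)=(1+q^{n-1})x\,T_{n-1}(x,s,q)+q^{n-1}s\,T_{n-2}(x,s,q)$ for $n\ge2$; $U_{-1}=0$, $U_0=1$, $U_n(x,s,q)=(1+q^{n})x\,U_{n-1}(x,s,q)+q^{n-1}s\,U_{n-2}(x,s,q)$ for $n\ge1$. *)

theory Defs
  imports Complex_Main
begin

fun T :: "nat \<Rightarrow> real \<Rightarrow> real \<Rightarrow> real \<Rightarrow> real" where
  "T 0 x s q = 1"
| "T (Suc 0) x s q = x"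
| "T (Suc (Suc n)) x s q =
     (1 + q ^ (Suc n)) * x * T (Suc n) x s q + q ^ (Suc n) * s * T n x s q"

text \<open>U_n for n \<ge> 0; the convention U_{-1} = 0 is built into the case n = 1:
  U_1 = (1+q) x U_0 + q^0 s U_{-1} = (1+q) x.\<close>
fun U :: "nat \<Rightarrow> real \<Rightarrow> real \<Rightarrow> real \<Rightarrow> real" where
  "U 0 x s q = 1"
| "U (Suc 0) x s q = (1 + q) * x"
| "U (Suc (Suc n)) x s q =
     (1 + q ^ (Suc (Suc n))) * x * U (Suc n) x s q + q ^ (Suc n) * s * U n x s q"

end

theory Submission
  imports Defs
begin

fun V :: "nat \<Rightarrow> real \<Rightarrow> real \<Rightarrow> real \<Rightarrow> real" where
  "V 0 x s q = 0"
| "V (Suc j) x s q = U j x (q * s) q"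

lemma T_rec: "T (Suc (Suc n)) x s q = (1 + q ^ Suc n) * x * T (Suc n) x s q + q ^ Suc n * s * T n x s q"
  by simp

lemma V_rec: "V (Suc (Suc n)) x s q = (1 + q ^ Suc n) * x * V (Suc n) x s q + q ^ Suc n * s * V n x s q"
  by (cases n) (simp_all add: algebra_simps)

definition p :: "nat \<Rightarrow> real \<Rightarrow> real \<Rightarrow> real" where
  "p n s q = q ^ ((n + 1) choose 2) * (- s) ^ n"

lemma p_Suc: "p (Suc n) s q = q ^ Suc n * (- s) * p n s q"
proof -
  have "(Suc n + 1) choose 2 = ((n + 1) choose 2) + Suc n"
  proof -
    have "Suc (Suc n) choose Suc 1 = (Suc n choose 1) + (Suc n choose Suc 1)"
      by (rule binomial_Suc_Suc)
    then show ?thesis by (simp add: numeral_2_eq_2 del: binomial_Suc_Suc)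
  qed
  then show ?thesis unfolding p_def by (simp add: power_add algebra_simps)
qed

lemma abs_alg:
  fixes a b b' c f0 f1 f2 g0 g1 g2 v0 v1 v2 w0 w1 w2 :: real
  assumes "f2 = a*f1 + b*f0" "g2 = a*g1 + b'*g0" "v2 = a*v1 + b*v0" "w2 = a*w1 + b'*w0"
  shows "f2*g2 - c*v2*w2 = a^2*(f1*g1 - c*v1*w1) + a*b'*(f1*g0 - c*v1*w0) + a*b*(f0*g1 - c*v0*w1) + b*b'*(f0*g0 - c*v0*w0)"
    and "f2*g1 - c*v2*w1 = a*(f1*g1 - c*v1*w1) + b*(f0*g1 - c*v0*w1)"
    and "f1*g2 - c*v1*w2 = a*(f1*g1 - c*v1*w1) + b'*(f1*g0 - c*v1*w0)"
  using assms by (simp_all add: algebra_simps power2_eq_square)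

lemma main:
  fixes x s q :: real
  defines "c \<equiv> x^2 + q*s"
  shows "T (Suc n) x s q * T (Suc n) x (q*s) q - c * V (Suc n) x s q * V (Suc n) x (q*s) q = p (Suc n) s q
       \<and> T n x s q * T n x (q*s) q - c * V n x s q * V n x (q*s) q = p n s q
       \<and> T (Suc n) x s q * T n x (q*s) q - c * V (Suc n) x s q * V n x (q*s) q = q^n * x * p n s q
       \<and> T n x s q * T (Suc n) x (q*s) q - c * V n x s q * V (Suc n) x (q*s) q = x * p n s q"
proof (induction n)
  case 0
  then show ?case by (simp add: p_def c_def numeral_2_eq_2 power2_eq_square)
next
  case (Suc n)
  define t where "t = q ^ n"
  define a where "a = (1 + q * t) * x"
  have e1: "T (Suc (Suc n)) x s q = a * T (Suc n) x s q + (q*t*s) * T n x s q"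
    unfolding a_def t_def by simp
  have e2: "T (Suc (Suc n)) x (q*s) q = a * T (Suc n) x (q*s) q + (q*q*t*s) * T n x (q*s) q"
    unfolding a_def t_def by (simp add: algebra_simps)
  have e3: "V (Suc (Suc n)) x s q = a * V (Suc n) x s q + (q*t*s) * V n x s q"
    unfolding a_def t_def using V_rec[of n x s q] by simp
  have e4: "V (Suc (Suc n)) x (q*s) q = a * V (Suc n) x (q*s) q + (q*q*t*s) * V n x (q*s) q"
    unfolding a_def t_def using V_rec[of n x "q*s" q] by (simp add: algebra_simps)
  note E = abs_alg[OF e1 e2 e3 e4, where c=c]
  have p1: "p (Suc n) s q = q*t*(-s) * p n s q" using p_Suc[of n s q] by (simp add: t_def)
  have p2: "p (Suc (Suc n)) s q = q*q*t*(-s) * p (Suc n) s q" using p_Suc[of "Suc n" s q] by (simp add: t_def)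
  have IH1: "T (Suc n) x s q * T (Suc n) x (q*s) q - c * V (Suc n) x s q * V (Suc n) x (q*s) q = q*t*(-s) * p n s q"
    using Suc.IH p1 by simp
  have IH2: "T n x s q * T n x (q*s) q - c * V n x s q * V n x (q*s) q = p n s q" using Suc.IH by simp
  have IH3: "T (Suc n) x s q * T n x (q*s) q - c * V (Suc n) x s q * V n x (q*s) q = t * x * p n s q"
    using Suc.IH by (simp add: t_def)
  have IH4: "T n x s q * T (Suc n) x (q*s) q - c * V n x s q * V (Suc n) x (q*s) q = x * p n s q"
    using Suc.IH by simp
  have A: "T (Suc (Suc n)) x s q * T (Suc (Suc n)) x (q*s) q - c * V (Suc (Suc n)) x s q * V (Suc (Suc n)) x (q*s) q = p (Suc (Suc n)) s q"
    unfolding E(1) IH1 IH2 IH3 IH4 p2 p1 a_def by (simp add: algebra_simps power2_eq_square)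
  have B: "T (Suc (Suc n)) x s q * T (Suc n) x (q*s) q - c * V (Suc (Suc n)) x s q * V (Suc n) x (q*s) q = q^Suc n * x * p (Suc n) s q"
    unfolding E(2) IH1 IH4 p1 a_def by (simp add: algebra_simps t_def)
  have C: "T (Suc n) x s q * T (Suc (Suc n)) x (q*s) q - c * V (Suc n) x s q * V (Suc (Suc n)) x (q*s) q = x * p (Suc n) s q"
    unfolding E(3) IH1 IH3 p1 a_def by (simp add: algebra_simps)
  show ?case using A B C Suc.IH by blast
qed

theorem theorem2p10:
  fixes x s q :: real and n :: nat
  assumes "q \<noteq> -1" and "n \<ge> 1"
  shows "T n x s q * T n x (q * s) q
           - (x^2 + q * s) * U (n - 1) x (q * s) q * U (n - 1) x (q^2 * s) q
         = q ^ ((n + 1) choose 2) * (- s) ^ n"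
proof -
  obtain m where m: "n = Suc m" using assms(2) by (cases n) auto
  have e: "q * (q * s) = q^2 * s" by (simp add: power2_eq_square)
  have h: "T (Suc m) x s q * T (Suc m) x (q*s) q - (x^2 + q*s) * U m x (q*s) q * U m x (q*(q*s)) q
           = q ^ ((Suc m + 1) choose 2) * (- s) ^ Suc m"
    using conjunct1[OF main[of m x s q]] by (simp only: V.simps p_def)
  show ?thesis using h unfolding e m by simp
qed

end
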